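(* Let $G$ be a finite group with $n=|G|$, and let $f_1,f_2:G\to\{0,1\}$ be sceneries. If $A_{f_1}(x_1,\dots,x_n)=A_{f_2}(x_1,\dots,x_n)$ for all $(x_1,\dots,x_n)\in G^n$, then $f_1$ is a shift of $f_2$, i.e. there exists $g\in G$ with $f_1(k)=f_2(kg)$ for all $k\in G$.
   Context: For a scenery $f:G\to\{0,1\}$, the multispectrum (with $n$ arguments) is $A_f(x_1,\dots,x_n)=\sum_{k\in G}f(k)f(x_1k)f(x_2x_1k)\cdots f(x_n\cdots x_1k)$ for $x_1,\dots,x_n\in G$. *)

theory Defs
  imports "HOL-Algebra.Group"
begin

definition scenery :: "('a, 'b) monoid_scheme \<Rightarrow> ('a \<Rightarrow> nat) \<Rightarrow> bool" where
  "scenery G f \<longleftrightarrow> (\<forall>k \<in> carrier G. f k \<in> {0, 1})"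

text \<open>Iterated left products: walk G x k 0 = k,
  walk G x k (j+1) = x_(j+1) * walk G x k j, where the arguments
  x_1,...,x_n are stored as x 0, ..., x (n-1).\<close>
fun walk :: "('a, 'b) monoid_scheme \<Rightarrow> (nat \<Rightarrow> 'a) \<Rightarrow> 'a \<Rightarrow> nat \<Rightarrow> 'a" where
  "walk G x k 0 = k"
| "walk G x k (Suc j) = x j \<otimes>\<^bsub>G\<^esub> walk G x k j"

definition multispectrum ::
  "('a, 'b) monoid_scheme \<Rightarrow> ('a \<Rightarrow> nat) \<Rightarrow> nat \<Rightarrow> (nat \<Rightarrow> 'a) \<Rightarrow> nat" where
  "multispectrum G f n x = (\<Sum>k \<in> carrier G. \<Prod>j \<in> {0..n}. f (walk G x k j))"

end

theory Submission
  imports Defs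
begin

context group
begin

lemma walk_w:
  assumes w: "\<And>j. w j \<in> carrier G" and w0: "w 0 = \<one>" and k: "k \<in> carrier G"
  shows "walk G (\<lambda>j. w (Suc j) \<otimes> inv (w j)) k j = w j \<otimes> k"
proof (induction j)
  case 0 then show ?case using w0 k by simp
next
  case (Suc j)
  have "inv (w j) \<otimes> (w j \<otimes> k) = k" using w k by (simp add: m_assoc[symmetric])
  then show ?case using Suc w k by (simp add: m_assoc)
qed

lemma prod01:
  assumes "\<forall>k \<in> carrier G. f k \<in> {0, 1::nat}" and "\<And>j. g j \<in> carrier G" and "finite A"
  shows "(\<Prod>j\<in>A. f (g j)) = (if \<forall>j\<in>A. f (g j) = 1 then 1 else 0)"
proof (cases "\<forall>j\<in>A. f (g j) = 1")
  case True then show ?thesis by simp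
next
  case False
  then obtain j where "j \<in> A" "f (g j) \<noteq> 1" by blast
  then have "f (g j) = 0" using assms by blast
  then have "(\<Prod>j\<in>A. f (g j)) = 0" by (intro prod_zero[OF assms(3)]) (use \<open>j \<in> A\<close> in blast)
  then show ?thesis using False by simp
qed

lemma ms_card:
  assumes fin: "finite (carrier G)" and f: "\<forall>k \<in> carrier G. f k \<in> {0, 1::nat}"
    and w: "\<And>j. w j \<in> carrier G" and w0: "w 0 = \<one>"
  shows "multispectrum G f n (\<lambda>j. w (Suc j) \<otimes> inv (w j))
     = card {k \<in> carrier G. \<forall>j\<in>{0..n}. f (w j \<otimes> k) = 1}"
proof -
  have "multispectrum G f n (\<lambda>j. w (Suc j) \<otimes> inv (w j))
      = (\<Sum>k \<in> carrier G. (if \<forall>j\<in>{0..n}. f (w j \<otimes> k) = 1 then 1 else 0))"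
    unfolding multispectrum_def
  proof (rule sum.cong[OF refl])
    fix k assume k: "k \<in> carrier G"
    have "(\<Prod>j\<in>{0..n}. f (walk G (\<lambda>j. w (Suc j) \<otimes> inv (w j)) k j))
        = (\<Prod>j\<in>{0..n}. f (w j \<otimes> k))" using walk_w[of w k, OF w w0 k] by simp
    also have "\<dots> = (if \<forall>j\<in>{0..n}. f (w j \<otimes> k) = 1 then 1 else 0)"
      by (rule prod01[OF f]) (use w k in auto)
    finally show "(\<Prod>j\<in>{0..n}. f (walk G (\<lambda>j. w (Suc j) \<otimes> inv (w j)) k j))
        = (if \<forall>j\<in>{0..n}. f (w j \<otimes> k) = 1 then 1 else (0::nat))" .
  qed
  also have "\<dots> = card {k \<in> carrier G. \<forall>j\<in>{0..n}. f (w j \<otimes> k) = 1}"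
    using fin by (simp add: sum.If_cases Int_def)
  finally show ?thesis .
qed

lemma main_aux:
  assumes "finite (carrier G)"
    and "scenery G f1" and "scenery G f2"
    and "\<forall>x. (\<forall>i < card (carrier G). x i \<in> carrier G) \<longrightarrow>
           multispectrum G f1 (card (carrier G)) x = multispectrum G f2 (card (carrier G)) x"
  shows "\<exists>g \<in> carrier G. \<forall>k \<in> carrier G. f1 k = f2 (k \<otimes> g)"
proof -
  define n where "n = card (carrier G)"
  have fin: "finite (carrier G)" by fact
  have F1: "\<forall>k \<in> carrier G. f1 k \<in> {0, 1::nat}" using assms(2) by (simp add: scenery_def)
  have F2: "\<forall>k \<in> carrier G. f2 k \<in> {0, 1::nat}" using assms(3) by (simp add: scenery_def)
  have EQ: "card {k \<in> carrier G. \<forall>j\<in>{0..n}. f1 (w j \<otimes> k) = 1}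
          = card {k \<in> carrier G. \<forall>j\<in>{0..n}. f2 (w j \<otimes> k) = 1}"
    if w: "\<And>j. w j \<in> carrier G" and w0: "w 0 = \<one>" for w
  proof -
    have "multispectrum G f1 n (\<lambda>j. w (Suc j) \<otimes> inv (w j))
        = multispectrum G f2 n (\<lambda>j. w (Suc j) \<otimes> inv (w j))"
      unfolding n_def by (rule assms(4)[rule_format]) (use w in simp)
    then show ?thesis using ms_card[where f=f1 and w=w and n=n, OF fin F1 w w0] ms_card[where f=f2 and w=w and n=n, OF fin F2 w w0] by simp
  qed
  define S1 where "S1 = {k \<in> carrier G. f1 k = 1}"
  define S2 where "S2 = {k \<in> carrier G. f2 k = 1}"
  have cardS: "card S1 = card S2"
  proof -
    have e: "{k \<in> carrier G. \<forall>j\<in>{0..n}. f (\<one> \<otimes> k) = 1} = {k \<in> carrier G. f k = 1}" for f :: "'a \<Rightarrow> nat"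
      by (rule Collect_cong) auto
    show ?thesis using EQ[of "\<lambda>_. \<one>"] unfolding S1_def S2_def e by simp
  qed
  have finS2: "finite S2" using fin unfolding S2_def by simp
  have finS1: "finite S1" using fin unfolding S1_def by simp
  show ?thesis
  proof (cases "S1 = {}")
    case True
    then have "S2 = {}" using cardS finS2 by simp
    show ?thesis
    proof (intro bexI[of _ \<one>] ballI)
      fix k assume kC: "k \<in> carrier G"
      have "k \<notin> S1" "k \<notin> S2" using True \<open>S2 = {}\<close> by auto
      then have "f1 k \<noteq> 1" "f2 k \<noteq> 1" using kC unfolding S1_def S2_def by auto
      then have "f1 k = 0" "f2 k = 0" using F1 F2 kC by auto
      then show "f1 k = f2 (k \<otimes> \<one>)" using kC by simp
    qed simp
  next
    case False
    then obtain s where s: "s \<in> S1" by blast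
    have sC: "s \<in> carrier G" using s unfolding S1_def by simp
    define T where "T = (\<lambda>t. t \<otimes> inv s) ` S1"
    have TC: "T \<subseteq> carrier G" using sC unfolding T_def S1_def by auto
    have oneT: "\<one> \<in> T" unfolding T_def
      by (rule image_eqI[of _ _ s]) (use s sC in simp_all)
    have cT: "card T \<le> n" unfolding n_def using TC fin by (simp add: card_mono)
    have finT: "finite T" using TC fin finite_subset by blast
    obtain h where h: "bij_betw h {0..<card T} T" using ex_bij_betw_nat_finite[OF finT] by blast
    define w where "w j = (if j = 0 then \<one> else if j - 1 < card T then h (j - 1) else \<one>)" for j
    have wT: "w j \<in> T" for j using oneT h unfolding w_def by (auto simp: bij_betw_def)
    have wC: "w j \<in> carrier G" for j using wT TC by blast
    have w0: "w 0 = \<one>" unfolding w_def by simp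
    have "s \<in> {k \<in> carrier G. \<forall>j\<in>{0..n}. f1 (w j \<otimes> k) = 1}"
    proof -
      have "f1 (w j \<otimes> s) = 1" for j
      proof -
        obtain t where t: "t \<in> S1" "w j = t \<otimes> inv s" using wT[of j] unfolding T_def by blast
        have "t \<in> carrier G" using t unfolding S1_def by simp
        then have "w j \<otimes> s = t" using t sC by (simp add: m_assoc)
        then show ?thesis using t unfolding S1_def by simp
      qed
      then show ?thesis using sC by simp
    qed
    then have "{k \<in> carrier G. \<forall>j\<in>{0..n}. f1 (w j \<otimes> k) = 1} \<noteq> {}" by blast
    moreover have "finite {k \<in> carrier G. \<forall>j\<in>{0..n}. f1 (w j \<otimes> k) = 1}" using fin by simp
    ultimately have "card {k \<in> carrier G. \<forall>j\<in>{0..n}. f1 (w j \<otimes> k) = 1} \<noteq> 0"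
      by simp
    then have "card {k \<in> carrier G. \<forall>j\<in>{0..n}. f2 (w j \<otimes> k) = 1} \<noteq> 0"
      using EQ[of w, OF wC w0] by simp
    then have "{k \<in> carrier G. \<forall>j\<in>{0..n}. f2 (w j \<otimes> k) = 1} \<noteq> {}"
      by (metis card.empty)
    then obtain k where k: "k \<in> carrier G" "\<forall>j\<in>{0..n}. f2 (w j \<otimes> k) = 1"
      by blast
    define g where "g = inv s \<otimes> k"
    have gC: "g \<in> carrier G" using sC k unfolding g_def by simp
    have map: "t \<otimes> g \<in> S2" if t: "t \<in> S1" for t
    proof -
      have tC: "t \<in> carrier G" using t unfolding S1_def by simp
      have "t \<otimes> inv s \<in> T" using t unfolding T_def by blast
      then have "t \<otimes> inv s \<in> h ` {0..<card T}" using h by (simp add: bij_betw_def)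
      then obtain i where i0: "i \<in> {0..<card T}" "t \<otimes> inv s = h i" by blast
      then have i: "i < card T" "h i = t \<otimes> inv s" by simp_all
      have "w (Suc i) = t \<otimes> inv s" using i unfolding w_def by simp
      moreover have "Suc i \<in> {0..n}" using i cT by simp
      ultimately have "f2 (t \<otimes> inv s \<otimes> k) = 1" using k(2) by (metis atLeastAtMost_iff)
      then show ?thesis using tC sC k unfolding S2_def g_def by (simp add: m_assoc)
    qed
    have inj: "inj_on (\<lambda>t. t \<otimes> g) S1"
      using gC unfolding S1_def inj_on_def by auto
    show ?thesis
    proof (intro bexI[OF _ gC] ballI)
      fix k' assume k': "k' \<in> carrier G"
      show "f1 k' = f2 (k' \<otimes> g)"
      proof (cases "f1 k' = 1")
        case True
        then have "k' \<otimes> g \<in> S2" using map k' unfolding S1_def by simp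
        then show ?thesis using True unfolding S2_def by simp
      next
        case False
        then have f10: "f1 k' = 0" using F1 k' by auto
        show ?thesis
        proof (rule ccontr)
          assume "f1 k' \<noteq> f2 (k' \<otimes> g)"
          moreover have "k' \<otimes> g \<in> carrier G" using k' gC by simp
          ultimately have "f2 (k' \<otimes> g) = 1" using f10 F2 by auto
          then have inS2: "k' \<otimes> g \<in> S2" using k' gC unfolding S2_def by simp
          have "(\<lambda>t. t \<otimes> g) ` S1 \<subseteq> S2 - {k' \<otimes> g}"
          proof
            fix y assume "y \<in> (\<lambda>t. t \<otimes> g) ` S1"
            then obtain t where t: "t \<in> S1" "y = t \<otimes> g" by blast
            have "t \<noteq> k'" using t False unfolding S1_def by auto
            then have "t \<otimes> g \<noteq> k' \<otimes> g" using t k' gC unfolding S1_def by auto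
            then show "y \<in> S2 - {k' \<otimes> g}" using t map by auto
          qed
          then have "card ((\<lambda>t. t \<otimes> g) ` S1) \<le> card (S2 - {k' \<otimes> g})"
            using finS2 by (simp add: card_mono)
          then have "card S1 \<le> card S2 - 1" using card_image[OF inj] inS2 finS2 by simp
          moreover have "card S2 > 0" using inS2 finS2 card_gt_0_iff by blast
          ultimately show False using cardS by simp
        qed
      qed
    qed
  qed
qed


end

theorem mainTheorem6:
  fixes G :: "('a, 'b) monoid_scheme" and f1 f2 :: "'a \<Rightarrow> nat"
  assumes "group G" and "finite (carrier G)"
    and "scenery G f1" and "scenery G f2"
    and "\<forall>x. (\<forall>i < card (carrier G). x i \<in> carrier G) \<longrightarrow>
           multispectrum G f1 (card (carrier G)) x = multispectrum G f2 (card (carrier G)) x"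
  shows "\<exists>g \<in> carrier G. \<forall>k \<in> carrier G. f1 k = f2 (k \<otimes>\<^bsub>G\<^esub> g)"
  using group.main_aux[OF assms(1) assms(2-5)] .

end
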